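(* Let $n\ge0$ and let $H_n$ be the pyrene system with $n$ pyrene fragments. Then $$F(H_n,x)=x^{n}\sum_{j=0}^{n}\sum_{i=\lceil\frac{j+n}{2}\rceil}^{n}(-1)^{n-i}2^{2i+j-n}\binom{i}{n-i}\binom{2i-n}{j}x^{j}.$$
   Context: Pyrene system: draw the hexagonal lattice so that every hexagon has two vertical sides; horizontally adjacent hexagons then share a vertical edge. For $n\ge1$, $H_n$ is the hexagonal system (the plane graph formed by the vertices and edges of the following $4n$ hexagons) consisting of a horizontal linear row of $2n$ hexagons $h_{1,1},h_{1,2},\dots,h_{n,1},h_{n,2}$, consecutive ones sharing a vertical edge, together with, for each $i$, a hexagon $s_{i,1}$ directly above and a hexagon $s_{i,2}$ directly below the common edge of $h_{i,1}$ and $h_{i,2}$ (each sharing an edge with both $h_{i,1}$ and $h_{i,2}$). $H_0$ is the null graph (with forcing polynomial $1$). For a perfect matching $M$ of $G$, a forcing set is a subset $S\subseteq M$ contained in no other perfect matching of $G$, and the forcing number $f(G,M)$ is the minimum size of a forcing set. The forcing polynomial is $F(G,x)=\sum_{M\in\mathcal{M}(G)}x^{f(G,M)}$, where $\mathcal{M}(G)$ is the set of perfect matchings of $G$. *)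

theory Defs
  imports "HOL-Computational_Algebra.Polynomial"
begin

(* Hexagonal lattice, hexagons with two vertical sides ("pointy-top").
   Integer coordinates in units of half the side length s/2 horizontally scaled so that
   the hexagon with centre (x,y) has vertices
     top (x,y+2), upper-right (x+1,y+1), lower-right (x+1,y-1),
     bottom (x,y-2), lower-left (x-1,y-1), upper-left (x-1,y+1).
   Horizontally adjacent hexagons have centres (x,y), (x+2,y) and share a vertical edge;
   the hexagon directly above (below) their common edge has centre (x+1,y+3) ((x+1,y-3)). *)

type_synonym vert = "int \<times> int"

definition hex_cycle :: "vert \<Rightarrow> vert list" where
  "hex_cycle c = (case c of (x,y) \<Rightarrow>
     [(x,y+2), (x+1,y+1), (x+1,y-1), (x,y-2), (x-1,y-1), (x-1,y+1)])"

definition hex_vertices :: "vert \<Rightarrow> vert set" where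
  "hex_vertices c = set (hex_cycle c)"

definition hex_edges :: "vert \<Rightarrow> vert set set" where
  "hex_edges c = (let vs = hex_cycle c in
     {{vs ! k, vs ! ((k + 1) mod 6)} | k. k < 6})"

(* Centres of the 4n hexagons of the pyrene system H_n (fragment i = 0..n-1):
   h_{i,1} at (4i,0), h_{i,2} at (4i+2,0), s_{i,1} at (4i+1,3), s_{i,2} at (4i+1,-3). *)
definition pyrene_centres :: "nat \<Rightarrow> vert set" where
  "pyrene_centres n = (\<Union>i\<in>{..<n}.
     {(4 * int i, 0), (4 * int i + 2, 0), (4 * int i + 1, 3), (4 * int i + 1, -3)})"

definition pyrene_V :: "nat \<Rightarrow> vert set" where
  "pyrene_V n = (\<Union>c\<in>pyrene_centres n. hex_vertices c)"

definition pyrene_E :: "nat \<Rightarrow> vert set set" where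
  "pyrene_E n = (\<Union>c\<in>pyrene_centres n. hex_edges c)"

definition perfect_matching :: "'a set \<Rightarrow> 'a set set \<Rightarrow> 'a set set \<Rightarrow> bool" where
  "perfect_matching V E M \<longleftrightarrow> M \<subseteq> E \<and> (\<forall>v\<in>V. \<exists>!e. e \<in> M \<and> v \<in> e)"

definition perfect_matchings :: "'a set \<Rightarrow> 'a set set \<Rightarrow> 'a set set set" where
  "perfect_matchings V E = {M. perfect_matching V E M}"

definition forcing_set :: "'a set \<Rightarrow> 'a set set \<Rightarrow> 'a set set \<Rightarrow> 'a set set \<Rightarrow> bool" where
  "forcing_set V E M S \<longleftrightarrow> S \<subseteq> M \<and>
     (\<forall>M'. perfect_matching V E M' \<and> S \<subseteq> M' \<longrightarrow> M' = M)"

definition forcing_number :: "'a set \<Rightarrow> 'a set set \<Rightarrow> 'a set set \<Rightarrow> nat" where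
  "forcing_number V E M = Min (card ` {S. forcing_set V E M S})"

definition forcing_polynomial :: "'a set \<Rightarrow> 'a set set \<Rightarrow> int poly" where
  "forcing_polynomial V E = (\<Sum>M\<in>perfect_matchings V E. monom 1 (forcing_number V E M))"

end

theory Submission
  imports Defs
begin

datatype st = SE | SL | SR
datatype vt = A1 | A2 | P1 | P2 | Q1 | Q2 | R1 | R2 | S1 | S2 | T1 | T2 | C1 | C2
datatype et = Vv | Ea1 | Ea2 | Pq1 | Pq2 | Qr1 | Qr2 | Rs1 | Rs2 | St1 | St2
  | Tc1 | Tc2 | Pc1 | Pc2 | CT1 | CT2 | Mid

lemma UNIV_et: "(UNIV :: et set) = {Vv, Ea1, Ea2, Pq1, Pq2, Qr1, Qr2, Rs1, Rs2, St1, St2,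
  Tc1, Tc2, Pc1, Pc2, CT1, CT2, Mid}"
  apply (rule set_eqI) apply (case_tac x) apply auto done

lemma UNIV_vt: "(UNIV :: vt set) = {A1, A2, P1, P2, Q1, Q2, R1, R2, S1, S2, T1, T2, C1, C2}"
  apply (rule set_eqI) apply (case_tac x) apply auto done

fun vpos :: "vt \<Rightarrow> int \<times> int" where
  "vpos A1 = (-1,1)" | "vpos A2 = (-1,-1)" | "vpos P1 = (0,2)" | "vpos P2 = (0,-2)"
| "vpos Q1 = (0,4)" | "vpos Q2 = (0,-4)" | "vpos R1 = (1,5)" | "vpos R2 = (1,-5)"
| "vpos S1 = (2,4)" | "vpos S2 = (2,-4)" | "vpos T1 = (2,2)" | "vpos T2 = (2,-2)"
| "vpos C1 = (1,1)" | "vpos C2 = (1,-1)"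

fun epos :: "et \<Rightarrow> (int \<times> int) \<times> (int \<times> int)" where
  "epos Vv = ((-1,1),(-1,-1))"
| "epos Ea1 = ((-1,1),(0,2))" | "epos Ea2 = ((-1,-1),(0,-2))"
| "epos Pq1 = ((0,2),(0,4))" | "epos Pq2 = ((0,-2),(0,-4))"
| "epos Qr1 = ((0,4),(1,5))" | "epos Qr2 = ((0,-4),(1,-5))"
| "epos Rs1 = ((1,5),(2,4))" | "epos Rs2 = ((1,-5),(2,-4))"
| "epos St1 = ((2,4),(2,2))" | "epos St2 = ((2,-4),(2,-2))"
| "epos Tc1 = ((2,2),(3,1))" | "epos Tc2 = ((2,-2),(3,-1))"
| "epos Pc1 = ((0,2),(1,1))" | "epos Pc2 = ((0,-2),(1,-1))"
| "epos CT1 = ((2,2),(1,1))" | "epos CT2 = ((2,-2),(1,-1))"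
| "epos Mid = ((1,1),(1,-1))"

definition sh :: "nat \<Rightarrow> int \<times> int \<Rightarrow> int \<times> int" where
  "sh i p = (4 * int i + fst p, snd p)"

definition vtx :: "nat \<Rightarrow> vt \<Rightarrow> vert" where
  "vtx i k = sh i (vpos k)"

definition edge :: "nat \<Rightarrow> et \<Rightarrow> vert set" where
  "edge i k = {sh i (fst (epos k)), sh i (snd (epos k))}"

lemma hex_edges_eq: "hex_edges (x,y) = {{(x,y+2),(x+1,y+1)}, {(x+1,y+1),(x+1,y-1)},
   {(x+1,y-1),(x,y-2)}, {(x,y-2),(x-1,y-1)}, {(x-1,y-1),(x-1,y+1)}, {(x-1,y+1),(x,y+2)}}"
proof -
  have e0: "\<And>f::nat \<Rightarrow> vert set. {f k | k. k < 6} = f ` {..<6}" by blast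
  have l6: "{..<6::nat} = {0,1,2,3,4,5}" by (auto simp: lessThan_nat_numeral)
  note e = e0[unfolded l6]
  show ?thesis unfolding hex_edges_def hex_cycle_def Let_def e
    by (simp add: insert_commute)
qed

lemma hex_vertices_eq: "hex_vertices (x,y) = {(x,y+2), (x+1,y+1), (x+1,y-1), (x,y-2), (x-1,y-1), (x-1,y+1)}"
  unfolding hex_vertices_def hex_cycle_def by simp

lemma frag_edges: "hex_edges (4 * int i, 0) \<union> hex_edges (4 * int i + 2, 0) \<union>
   hex_edges (4 * int i + 1, 3) \<union> hex_edges (4 * int i + 1, -3) = range (edge i) \<union> {edge (Suc i) Vv}"
  unfolding hex_edges_eq UNIV_et edge_def sh_def
  apply (rule equalityI)
  apply (simp add: doubleton_eq_iff)
  apply (simp add: doubleton_eq_iff)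
  done

lemma frag_vertices: "hex_vertices (4 * int i, 0) \<union> hex_vertices (4 * int i + 2, 0) \<union>
   hex_vertices (4 * int i + 1, 3) \<union> hex_vertices (4 * int i + 1, -3) = range (vtx i) \<union> {vtx (Suc i) A1, vtx (Suc i) A2}"
  unfolding hex_vertices_eq UNIV_vt vtx_def sh_def
  apply (rule equalityI)
  apply simp
  apply simp
  done

lemma edge_inj: "edge i k = edge j l \<longleftrightarrow> i = j \<and> k = l"
  apply (cases k; cases l) apply (auto simp: edge_def sh_def doubleton_eq_iff) apply presburger+ done

lemma vtx_inj: "vtx i k = vtx j l \<longleftrightarrow> i = j \<and> k = l"
  apply (cases k; cases l) apply (auto simp: vtx_def sh_def) apply presburger+ done

fun cands :: "nat \<Rightarrow> vt \<Rightarrow> (nat \<times> et) list" where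
  "cands i A1 = [(i,Vv),(i,Ea1)] @ (case i of 0 \<Rightarrow> [] | Suc j \<Rightarrow> [(j,Tc1)])"
| "cands i A2 = [(i,Vv),(i,Ea2)] @ (case i of 0 \<Rightarrow> [] | Suc j \<Rightarrow> [(j,Tc2)])"
| "cands i P1 = [(i,Ea1),(i,Pq1),(i,Pc1)]"
| "cands i P2 = [(i,Ea2),(i,Pq2),(i,Pc2)]"
| "cands i Q1 = [(i,Pq1),(i,Qr1)]"
| "cands i Q2 = [(i,Pq2),(i,Qr2)]"
| "cands i R1 = [(i,Qr1),(i,Rs1)]"
| "cands i R2 = [(i,Qr2),(i,Rs2)]"
| "cands i S1 = [(i,Rs1),(i,St1)]"
| "cands i S2 = [(i,Rs2),(i,St2)]"
| "cands i T1 = [(i,St1),(i,Tc1),(i,CT1)]"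
| "cands i T2 = [(i,St2),(i,Tc2),(i,CT2)]"
| "cands i C1 = [(i,Pc1),(i,CT1),(i,Mid)]"
| "cands i C2 = [(i,Pc2),(i,CT2),(i,Mid)]"

lemma incid: "vtx i k \<in> edge j l \<longleftrightarrow> (j,l) \<in> set (cands i k)"
  apply (cases k; cases l; cases i) apply (auto simp: vtx_def edge_def sh_def) apply presburger+ done

lemma cands_distinct: "distinct (cands i k)"
  by (cases k; cases i) auto

definition EI :: "nat \<Rightarrow> (nat \<times> et) set" where
  "EI n = {(i,k). i < n \<or> (i = n \<and> k = Vv)}"
definition VI :: "nat \<Rightarrow> (nat \<times> vt) set" where
  "VI n = {(i,k). i < n \<or> (i = n \<and> (k = A1 \<or> k = A2))}"
definition ed :: "nat \<times> et \<Rightarrow> vert set" where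
  "ed p = edge (fst p) (snd p)"
definition vx :: "nat \<times> vt \<Rightarrow> vert" where
  "vx p = vtx (fst p) (snd p)"

lemma ed_inj: "ed p = ed q \<longleftrightarrow> p = q"
  by (cases p; cases q) (simp add: ed_def edge_inj)

lemma inj_ed: "inj ed"
  by (simp add: inj_def ed_inj)

lemma pyrene_E_frag: "pyrene_E n = (\<Union>i<n. range (edge i) \<union> {edge (Suc i) Vv})"
proof -
  have "pyrene_E n = (\<Union>i<n. hex_edges (4 * int i, 0) \<union> hex_edges (4 * int i + 2, 0) \<union>
   hex_edges (4 * int i + 1, 3) \<union> hex_edges (4 * int i + 1, -3))"
    unfolding pyrene_E_def pyrene_centres_def by (simp add: UN_UN_flatten Un_assoc)
  then show ?thesis by (simp only: frag_edges)
qed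

lemma pyrene_V_frag: "pyrene_V n = (\<Union>i<n. range (vtx i) \<union> {vtx (Suc i) A1, vtx (Suc i) A2})"
proof -
  have "pyrene_V n = (\<Union>i<n. hex_vertices (4 * int i, 0) \<union> hex_vertices (4 * int i + 2, 0) \<union>
   hex_vertices (4 * int i + 1, 3) \<union> hex_vertices (4 * int i + 1, -3))"
    unfolding pyrene_V_def pyrene_centres_def by (simp add: UN_UN_flatten Un_assoc)
  then show ?thesis by (simp only: frag_vertices)
qed

lemma pyrene_E_eq: "0 < n \<Longrightarrow> pyrene_E n = ed ` EI n"
  unfolding pyrene_E_frag EI_def ed_def
  apply (rule equalityI)
   apply force
  apply clarsimp
  apply (erule disjE)
   apply blast
  apply (rule_tac x="n - 1" in bexI)
   apply simp
  apply simp
  done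

lemma pyrene_V_eq: "0 < n \<Longrightarrow> pyrene_V n = vx ` VI n"
  unfolding pyrene_V_frag VI_def vx_def
  apply (rule equalityI)
   apply force
  apply clarsimp
  apply (erule disjE)
   apply blast
  apply (rule_tac x="n - 1" in bexI)
   apply auto
  done

lemma ex1_list: "distinct xs \<Longrightarrow> (\<exists>!q. P q \<and> q \<in> set xs) \<longleftrightarrow> length (filter P xs) = 1"
proof -
  assume d: "distinct xs"
  have "length (filter P xs) = card ({x. P x} \<inter> set xs)" using distinct_length_filter[OF d] .
  moreover have "(\<exists>!q. P q \<and> q \<in> set xs) \<longleftrightarrow> (\<exists>x. {x. P x} \<inter> set xs = {x})"
  proof
    assume "\<exists>!q. P q \<and> q \<in> set xs"
    then obtain q where "P q" "q \<in> set xs" "\<And>y. P y \<and> y \<in> set xs \<Longrightarrow> y = q" by blast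
    then have "{x. P x} \<inter> set xs = {q}" by blast
    then show "\<exists>x. {x. P x} \<inter> set xs = {x}" by blast
  next
    assume "\<exists>x. {x. P x} \<inter> set xs = {x}"
    then obtain q where q: "{x. P x} \<inter> set xs = {q}" by blast
    then have "P q \<and> q \<in> set xs" by blast
    moreover have "\<And>y. P y \<and> y \<in> set xs \<Longrightarrow> y = q" using q by blast
    ultimately show "\<exists>!q. P q \<and> q \<in> set xs" by blast
  qed
  ultimately show ?thesis using card_1_singleton_iff by (metis One_nat_def)
qed

lemma ex1_image: "inj f \<Longrightarrow> (\<exists>!e. e \<in> f ` S \<and> P e) \<longleftrightarrow> (\<exists>!q. q \<in> S \<and> P (f q))"
  unfolding inj_def by blast

lemma pm_sel:
  assumes n: "0 < n" and S: "Sel \<subseteq> EI n"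
  shows "perfect_matching (pyrene_V n) (pyrene_E n) (ed ` Sel) \<longleftrightarrow>
    (\<forall>p\<in>VI n. length (filter (\<lambda>q. q \<in> Sel) (cands (fst p) (snd p))) = 1)"
proof -
  have sub: "ed ` Sel \<subseteq> pyrene_E n" using S pyrene_E_eq[OF n] by auto
  have "(\<exists>!e. e \<in> ed ` Sel \<and> vx p \<in> e) \<longleftrightarrow> length (filter (\<lambda>q. q \<in> Sel) (cands (fst p) (snd p))) = 1" for p
  proof -
    have "(\<exists>!e. e \<in> ed ` Sel \<and> vx p \<in> e) \<longleftrightarrow> (\<exists>!q. q \<in> Sel \<and> vx p \<in> ed q)"
      by (rule ex1_image[OF inj_ed])
    also have "\<dots> \<longleftrightarrow> (\<exists>!q. q \<in> Sel \<and> q \<in> set (cands (fst p) (snd p)))"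
      by (simp add: vx_def ed_def incid case_prod_beta)
    also have "\<dots> \<longleftrightarrow> length (filter (\<lambda>q. q \<in> Sel) (cands (fst p) (snd p))) = 1"
      by (rule ex1_list[OF cands_distinct])
    finally show ?thesis .
  qed
  then show ?thesis unfolding perfect_matching_def pyrene_V_eq[OF n] using sub by auto
qed

lemma pm_is_sel:
  assumes n: "0 < n" and pm: "perfect_matching (pyrene_V n) (pyrene_E n) M"
  shows "M = ed ` {p \<in> EI n. ed p \<in> M}"
  using pm unfolding perfect_matching_def pyrene_E_eq[OF n] by blast

type_synonym word = "(nat \<Rightarrow> st) \<times> (nat \<Rightarrow> bool) \<times> (nat \<Rightarrow> bool)"

definition mid :: "st \<Rightarrow> st \<Rightarrow> bool" where
  "mid l r \<longleftrightarrow> l = SR \<or> r = SL"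

fun selk :: "st \<Rightarrow> st \<Rightarrow> bool \<Rightarrow> bool \<Rightarrow> et \<Rightarrow> bool" where
  "selk l r t b Vv = (l = SE)"
| "selk l r t b Ea1 = (l = SR)"
| "selk l r t b Ea2 = (l = SR)"
| "selk l r t b Tc1 = (r = SL)"
| "selk l r t b Tc2 = (r = SL)"
| "selk l r t b Mid = mid l r"
| "selk l r t b Pc1 = (\<not> mid l r \<and> t)"
| "selk l r t b CT1 = (\<not> mid l r \<and> \<not> t)"
| "selk l r t b Qr1 = ((\<not> mid l r \<and> t) \<or> l = SR)"
| "selk l r t b St1 = ((\<not> mid l r \<and> t) \<or> l = SR)"
| "selk l r t b Pq1 = ((\<not> mid l r \<and> \<not> t) \<or> r = SL)"
| "selk l r t b Rs1 = ((\<not> mid l r \<and> \<not> t) \<or> r = SL)"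
| "selk l r t b Pc2 = (\<not> mid l r \<and> b)"
| "selk l r t b CT2 = (\<not> mid l r \<and> \<not> b)"
| "selk l r t b Qr2 = ((\<not> mid l r \<and> b) \<or> l = SR)"
| "selk l r t b St2 = ((\<not> mid l r \<and> b) \<or> l = SR)"
| "selk l r t b Pq2 = ((\<not> mid l r \<and> \<not> b) \<or> r = SL)"
| "selk l r t b Rs2 = ((\<not> mid l r \<and> \<not> b) \<or> r = SL)"

fun sel :: "word \<Rightarrow> nat \<times> et \<Rightarrow> bool" where
  "sel (J,t,b) (i,k) = selk (J i) (J (Suc i)) (t i) (b i) k"

definition Mw :: "nat \<Rightarrow> word \<Rightarrow> vert set set" where
  "Mw n w = ed ` {p \<in> EI n. sel w p}"

definition lv :: "st \<Rightarrow> bool \<Rightarrow> bool \<Rightarrow> st \<Rightarrow> bool" where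
  "lv l t b r \<longleftrightarrow> \<not> (l = SR \<and> r = SL) \<and> (mid l r \<longrightarrow> \<not> t \<and> \<not> b)"

fun valid :: "nat \<Rightarrow> word \<Rightarrow> bool" where
  "valid n (J,t,b) \<longleftrightarrow> (J 0 = SE \<or> J 0 = SR) \<and> (J n = SE \<or> J n = SL) \<and>
     (\<forall>i<n. lv (J i) (t i) (b i) (J (Suc i)))"

fun canon :: "nat \<Rightarrow> word \<Rightarrow> bool" where
  "canon n (J,t,b) \<longleftrightarrow> (\<forall>i>n. J i = SE) \<and> (\<forall>i\<ge>n. \<not> t i \<and> \<not> b i)"

lemma valid_pm:
  assumes n: "0 < n" and v: "valid n w"
  shows "perfect_matching (pyrene_V n) (pyrene_E n) (Mw n w)"
proof -
  obtain J t b where w: "w = (J,t,b)" by (cases w)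
  have sub: "{p \<in> EI n. sel w p} \<subseteq> EI n" by blast
  have "length (filter (\<lambda>q. q \<in> {p \<in> EI n. sel w p}) (cands i k)) = 1" if ik: "(i,k) \<in> VI n" for i k
  proof (cases "i < n")
    case True
    have lv: "lv (J i) (t i) (b i) (J (Suc i))" using v w True by simp
    have j0: "J 0 = SE \<or> J 0 = SR" using v w by simp
    show ?thesis
    proof (cases "k = A1 \<or> k = A2")
      case True
      then show ?thesis using j0 \<open>i < n\<close> w
        by (cases i; cases "J i"; auto simp: EI_def)
    next
      case False
      then show ?thesis using lv \<open>i < n\<close> w
        by (cases k; cases "J i"; cases "J (Suc i)"; cases "t i"; cases "b i"; simp add: EI_def lv_def mid_def)
    qed
  next
    case False
    then have i: "i = n" and k: "k = A1 \<or> k = A2" using ik by (auto simp: VI_def)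
    have jn: "J n = SE \<or> J n = SL" using v w by simp
    obtain m where m: "n = Suc m" using n by (cases n) auto
    show ?thesis using i k jn w m by (cases "J n"; auto simp: EI_def)
  qed
  then show ?thesis unfolding Mw_def by (subst pm_sel[OF n sub]) auto
qed


definition one :: "bool list \<Rightarrow> bool" where
  "one xs \<longleftrightarrow> length (filter id xs) = 1"

lemma one_simps: "one [a,b] \<longleftrightarrow> (a \<noteq> b)" "one [a,b,c] \<longleftrightarrow> (a \<and> \<not>b \<and> \<not>c) \<or> (\<not>a \<and> b \<and> \<not>c) \<or> (\<not>a \<and> \<not>b \<and> c)"
  by (auto simp: one_def)

lemma frag_prop:
  assumes
   "one [vv0, ea1, lt1]" "one [vv0, ea2, lt2]" "lt1 = lt2"
   "one [ea1,pq1,pc1]" "one [ea2,pq2,pc2]" "one [pq1,qr1]" "one [pq2,qr2]"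
   "one [qr1,rs1]" "one [qr2,rs2]" "one [rs1,st1]" "one [rs2,st2]"
   "one [st1,tc1,ct1]" "one [st2,tc2,ct2]" "one [pc1,ct1,mi]" "one [pc2,ct2,mi]"
   "one [vv1, re1, tc1]" "one [vv1, re2, tc2]"
   and l: "l = (if vv0 then SE else if lt1 then SL else SR)"
   and r: "r = (if vv1 then SE else if tc1 then SL else SR)"
  shows "tc1 = tc2 \<and> lv l pc1 pc2 r \<and>
    vv0 = selk l r pc1 pc2 Vv \<and> ea1 = selk l r pc1 pc2 Ea1 \<and> ea2 = selk l r pc1 pc2 Ea2 \<and>
    pq1 = selk l r pc1 pc2 Pq1 \<and> pq2 = selk l r pc1 pc2 Pq2 \<and>
    qr1 = selk l r pc1 pc2 Qr1 \<and> qr2 = selk l r pc1 pc2 Qr2 \<and>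
    rs1 = selk l r pc1 pc2 Rs1 \<and> rs2 = selk l r pc1 pc2 Rs2 \<and>
    st1 = selk l r pc1 pc2 St1 \<and> st2 = selk l r pc1 pc2 St2 \<and>
    tc1 = selk l r pc1 pc2 Tc1 \<and> tc2 = selk l r pc1 pc2 Tc2 \<and>
    pc1 = selk l r pc1 pc2 Pc1 \<and> pc2 = selk l r pc1 pc2 Pc2 \<and>
    ct1 = selk l r pc1 pc2 CT1 \<and> ct2 = selk l r pc1 pc2 CT2 \<and> mi = selk l r pc1 pc2 Mid"
  unfolding l r
  using assms(1-17) unfolding one_simps
  by (cases vv0; cases vv1; cases lt1; cases tc1; cases pc1; cases pc2; simp add: lv_def mid_def; blast)

lemma all_et: "(\<forall>k. P k) \<longleftrightarrow> P Vv \<and> P Ea1 \<and> P Ea2 \<and> P Pq1 \<and> P Pq2 \<and> P Qr1 \<and> P Qr2 \<and>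
  P Rs1 \<and> P Rs2 \<and> P St1 \<and> P St2 \<and> P Tc1 \<and> P Tc2 \<and> P Pc1 \<and> P Pc2 \<and> P CT1 \<and> P CT2 \<and> P Mid"
  apply (rule iffI)
   apply simp
  apply (rule allI)
  apply (case_tac k)
                   apply simp_all
  done

lemma one_map: "one (map m xs) \<longleftrightarrow> length (filter m xs) = 1"
  by (simp add: one_def filter_map comp_def)

lemma pm_word:
  assumes n: "0 < n" and pm: "perfect_matching (pyrene_V n) (pyrene_E n) M"
  shows "\<exists>w. valid n w \<and> canon n w \<and> M = Mw n w"
proof -
  define m where "m p \<longleftrightarrow> ed p \<in> M" for p
  have Msel: "M = ed ` {p \<in> EI n. m p}" unfolding m_def by (rule pm_is_sel[OF n pm])
  have mEI: "p \<in> EI n" if "m p" for p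
  proof -
    have "M \<subseteq> ed ` EI n" using pm pyrene_E_eq[OF n] by (simp add: perfect_matching_def)
    then have "ed p \<in> ed ` EI n" using that unfolding m_def by blast
    then show ?thesis by (simp add: inj_image_mem_iff[OF inj_ed])
  qed
  have sub: "{p \<in> EI n. m p} \<subseteq> EI n" by blast
  have F0: "\<forall>p\<in>VI n. length (filter (\<lambda>q. q \<in> {p \<in> EI n. m p}) (cands (fst p) (snd p))) = 1"
    using pm pm_sel[OF n sub] Msel by simp
  have F: "one (map m (cands i k))" if "(i,k) \<in> VI n" for i k
  proof -
    have "filter (\<lambda>q. q \<in> {p \<in> EI n. m p}) (cands i k) = filter m (cands i k)"
      using mEI by (intro filter_cong) auto
    moreover have "length (filter (\<lambda>q. q \<in> {p \<in> EI n. m p}) (cands (fst (i,k)) (snd (i,k)))) = 1"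
      using F0 that by blast
    ultimately show ?thesis by (simp add: one_map)
  qed
  define lt where "lt i = (case i of 0 \<Rightarrow> False | Suc j \<Rightarrow> m (j,Tc1))" for i
  define lt2 where "lt2 i = (case i of 0 \<Rightarrow> False | Suc j \<Rightarrow> m (j,Tc2))" for i
  define J where "J i = (if i \<le> n then (if m (i,Vv) then SE else if lt i then SL else SR) else SE)" for i
  define t where "t i = (i < n \<and> m (i,Pc1))" for i
  define b where "b i = (i < n \<and> m (i,Pc2))" for i
  have A1: "one [m (i,Vv), m (i,Ea1), lt i]" if "i \<le> n" for i
  proof -
    have "(i,A1) \<in> VI n" using that by (auto simp: VI_def)
    from F[OF this] show ?thesis by (cases i) (auto simp: lt_def one_def split: if_splits)
  qed
  have A2: "one [m (i,Vv), m (i,Ea2), lt2 i]" if "i \<le> n" for i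
  proof -
    have "(i,A2) \<in> VI n" using that by (auto simp: VI_def)
    from F[OF this] show ?thesis by (cases i) (auto simp: lt2_def one_def split: if_splits)
  qed
  have Fi: "one (map m (cands i k))" if "i < n" for i k
    using F that by (auto simp: VI_def)
  have FP: "lt (Suc i) = lt2 (Suc i) \<and> lv (J i) (t i) (b i) (J (Suc i)) \<and> (\<forall>k. m (i,k) = selk (J i) (J (Suc i)) (t i) (b i) k)"
    if i: "i < n" and nm: "lt i = lt2 i" for i
  proof -
    have i1: "i \<le> n" "Suc i \<le> n" using i by auto
    have ntc: "lt (Suc i) = m (i,Tc1)" "lt2 (Suc i) = m (i,Tc2)" by (simp_all add: lt_def lt2_def)
    have Jl: "J i = (if m (i,Vv) then SE else if lt i then SL else SR)" using i1 by (simp add: J_def)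
    have Jr: "J (Suc i) = (if m (Suc i,Vv) then SE else if m (i,Tc1) then SL else SR)"
      using i1 by (simp add: J_def lt_def)
    have tb: "t i = m (i,Pc1)" "b i = m (i,Pc2)" using i by (simp_all add: t_def b_def)
    have vi1: "(Suc i, A1) \<in> VI n" and vi2: "(Suc i, A2) \<in> VI n" using i1 by (auto simp: VI_def)
    have P: "m (i,Tc1) = m (i,Tc2) \<and> lv (J i) (m (i,Pc1)) (m (i,Pc2)) (J (Suc i)) \<and>
      m (i,Vv) = selk (J i) (J (Suc i)) (m (i,Pc1)) (m (i,Pc2)) Vv \<and>
      m (i,Ea1) = selk (J i) (J (Suc i)) (m (i,Pc1)) (m (i,Pc2)) Ea1 \<and>
      m (i,Ea2) = selk (J i) (J (Suc i)) (m (i,Pc1)) (m (i,Pc2)) Ea2 \<and>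
      m (i,Pq1) = selk (J i) (J (Suc i)) (m (i,Pc1)) (m (i,Pc2)) Pq1 \<and>
      m (i,Pq2) = selk (J i) (J (Suc i)) (m (i,Pc1)) (m (i,Pc2)) Pq2 \<and>
      m (i,Qr1) = selk (J i) (J (Suc i)) (m (i,Pc1)) (m (i,Pc2)) Qr1 \<and>
      m (i,Qr2) = selk (J i) (J (Suc i)) (m (i,Pc1)) (m (i,Pc2)) Qr2 \<and>
      m (i,Rs1) = selk (J i) (J (Suc i)) (m (i,Pc1)) (m (i,Pc2)) Rs1 \<and>
      m (i,Rs2) = selk (J i) (J (Suc i)) (m (i,Pc1)) (m (i,Pc2)) Rs2 \<and>
      m (i,St1) = selk (J i) (J (Suc i)) (m (i,Pc1)) (m (i,Pc2)) St1 \<and>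
      m (i,St2) = selk (J i) (J (Suc i)) (m (i,Pc1)) (m (i,Pc2)) St2 \<and>
      m (i,Tc1) = selk (J i) (J (Suc i)) (m (i,Pc1)) (m (i,Pc2)) Tc1 \<and>
      m (i,Tc2) = selk (J i) (J (Suc i)) (m (i,Pc1)) (m (i,Pc2)) Tc2 \<and>
      m (i,Pc1) = selk (J i) (J (Suc i)) (m (i,Pc1)) (m (i,Pc2)) Pc1 \<and>
      m (i,Pc2) = selk (J i) (J (Suc i)) (m (i,Pc1)) (m (i,Pc2)) Pc2 \<and>
      m (i,CT1) = selk (J i) (J (Suc i)) (m (i,Pc1)) (m (i,Pc2)) CT1 \<and>
      m (i,CT2) = selk (J i) (J (Suc i)) (m (i,Pc1)) (m (i,Pc2)) CT2 \<and>
      m (i,Mid) = selk (J i) (J (Suc i)) (m (i,Pc1)) (m (i,Pc2)) Mid"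
      apply (rule frag_prop[where ?re1.0="m (Suc i,Ea1)" and ?re2.0="m (Suc i,Ea2)", OF A1[OF i1(1)] A2[OF i1(1)] nm])
      using Fi[OF i, of P1] Fi[OF i, of P2] Fi[OF i, of Q1] Fi[OF i, of Q2]
        Fi[OF i, of R1] Fi[OF i, of R2] Fi[OF i, of S1] Fi[OF i, of S2]
        Fi[OF i, of T1] Fi[OF i, of T2] Fi[OF i, of C1] Fi[OF i, of C2]
        F[of "Suc i" A1, OF vi1] F[of "Suc i" A2, OF vi2] i1 Jl Jr
      by (simp_all add: VI_def)
    have K: "\<forall>k. m (i,k) = selk (J i) (J (Suc i)) (t i) (b i) k"
      unfolding all_et tb using P apply (elim conjE) apply (intro conjI) apply assumption+ done
    have c1: "m (i,Tc1) = m (i,Tc2)" using P[THEN conjunct1] .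
    have c2: "lv (J i) (m (i,Pc1)) (m (i,Pc2)) (J (Suc i))" using P[THEN conjunct2, THEN conjunct1] .
    show ?thesis
    proof (intro conjI)
      show "lt (Suc i) = lt2 (Suc i)" using c1 ntc by simp
      show "lv (J i) (t i) (b i) (J (Suc i))" using c2 tb by simp
      show "\<forall>k. m (i,k) = selk (J i) (J (Suc i)) (t i) (b i) k" by (rule K)
    qed
  qed
  have NM: "lt i = lt2 i" if "i \<le> n" for i
    using that
  proof (induction i)
    case 0 then show ?case by (simp add: lt_def lt2_def)
  next
    case (Suc i) then show ?case using FP[of i] by simp
  qed
  define w where "w = (J,t,b)"
  have v: "valid n w"
  proof -
    have "J 0 = SE \<or> J 0 = SR" by (simp add: J_def lt_def)
    moreover have "J n = SE \<or> J n = SL"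
    proof -
      have "\<not> m (n,Ea1)" using mEI by (auto simp: EI_def)
      then show ?thesis using A1[of n] by (auto simp: J_def one_def split: if_splits)
    qed
    moreover have "\<forall>i<n. lv (J i) (t i) (b i) (J (Suc i))" using FP NM by simp
    ultimately show ?thesis by (simp add: w_def)
  qed
  have c: "canon n w" by (simp add: w_def J_def t_def b_def)
  have "{p \<in> EI n. m p} = {p \<in> EI n. sel w p}"
  proof (intro Collect_cong conj_cong refl)
    fix p assume "p \<in> EI n"
    then obtain i k where p: "p = (i,k)" and "i < n \<or> (i = n \<and> k = Vv)" by (auto simp: EI_def)
    then consider "i < n" | "i = n" "k = Vv" by blast
    then show "m p = sel w p"
    proof cases
      case 1 then show ?thesis using FP[OF 1 NM] p by (simp add: w_def)
    next
      case 2 then show ?thesis using p by (simp add: w_def J_def)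
    qed
  qed
  then have "M = Mw n w" using Msel by (simp add: Mw_def)
  then show ?thesis using v c by blast
qed


fun wt :: "nat \<Rightarrow> word \<Rightarrow> nat" where
  "wt n (J,t,b) = (\<Sum>i<n. if mid (J i) (J (Suc i)) then 1 else 2)"

lemma finite_et: "finite (UNIV :: et set)"
  by (simp add: UNIV_et)

lemma finite_EI: "finite (EI n)"
proof -
  have "EI n \<subseteq> {..n} \<times> UNIV" by (auto simp: EI_def)
  then show ?thesis using finite_et by (meson finite_SigmaI finite_atMost finite_subset)
qed

lemma mem_Mw: "ed p \<in> Mw n w \<longleftrightarrow> p \<in> EI n \<and> sel w p"
  by (auto simp: Mw_def inj_image_mem_iff[OF inj_ed])

lemma flip_lemma:
  assumes n: "0 < n" and fs: "forcing_set (pyrene_V n) (pyrene_E n) (Mw n w) S"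
    and v': "valid n w'" and D: "\<forall>p. sel w p \<and> p \<notin> D \<longrightarrow> sel w' p"
    and p0: "p0 \<in> EI n" "sel w p0 \<noteq> sel w' p0"
  shows "\<exists>e\<in>S. e \<in> ed ` D"
proof (rule ccontr)
  assume no: "\<not> (\<exists>e\<in>S. e \<in> ed ` D)"
  have SM: "S \<subseteq> Mw n w" using fs by (simp add: forcing_set_def)
  have "S \<subseteq> Mw n w'"
  proof
    fix e assume e: "e \<in> S"
    then obtain p where p: "e = ed p" "p \<in> EI n" "sel w p" using SM by (auto simp: Mw_def)
    then have "p \<notin> D" using no e by blast
    then have "sel w' p" using p D by blast
    then show "e \<in> Mw n w'" using p by (simp add: mem_Mw)
  qed
  moreover have "perfect_matching (pyrene_V n) (pyrene_E n) (Mw n w')" by (rule valid_pm[OF n v'])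
  ultimately have "Mw n w' = Mw n w" using fs by (simp add: forcing_set_def)
  then have "sel w p0 = sel w' p0" using p0(1) mem_Mw by metis
  then show False using p0(2) by simp
qed

lemma sel_same: "J' j = J j \<Longrightarrow> J' (Suc j) = J (Suc j) \<Longrightarrow> t' j = t j \<Longrightarrow> b' j = b j \<Longrightarrow>
  sel (J',t',b') (j,k) = sel (J,t,b) (j,k)"
  by simp

definition Dtop :: "nat \<Rightarrow> (nat \<times> et) set" where
  "Dtop i = {(i,Pc1),(i,CT1),(i,Pq1),(i,Qr1),(i,Rs1),(i,St1)}"
definition Dbot :: "nat \<Rightarrow> (nat \<times> et) set" where
  "Dbot i = {(i,Pc2),(i,CT2),(i,Pq2),(i,Qr2),(i,Rs2),(i,St2)}"
definition DR :: "nat \<Rightarrow> (nat \<times> et) set" where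
  "DR i = {(i,Ea1),(i,Ea2),(i,Mid)}"
definition DL :: "nat \<Rightarrow> (nat \<times> et) set" where
  "DL i = {(i,Tc1),(i,Tc2),(i,Mid)}"

lemma flip_top:
  assumes v: "valid n (J,t,b)" and i: "i < n" and nm: "\<not> mid (J i) (J (Suc i))"
  shows "valid n (J, t(i := \<not> t i), b) \<and> (\<forall>p. sel (J,t,b) p \<and> p \<notin> Dtop i \<longrightarrow> sel (J, t(i := \<not> t i), b) p)
    \<and> sel (J,t,b) (i,Pc1) \<noteq> sel (J, t(i := \<not> t i), b) (i,Pc1)"
proof (intro conjI)
  show "valid n (J, t(i := \<not> t i), b)" using v nm by (auto simp: lv_def)
  show "\<forall>p. sel (J,t,b) p \<and> p \<notin> Dtop i \<longrightarrow> sel (J, t(i := \<not> t i), b) p"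
  proof (intro allI impI)
    fix p assume p: "sel (J,t,b) p \<and> p \<notin> Dtop i"
    obtain j k where jk: "p = (j,k)" by (cases p)
    show "sel (J, t(i := \<not> t i), b) p"
    proof (cases "j = i")
      case True then show ?thesis using p jk nm by (cases k) (auto simp: Dtop_def)
    next
      case False then show ?thesis using p jk by simp
    qed
  qed
  show "sel (J,t,b) (i,Pc1) \<noteq> sel (J, t(i := \<not> t i), b) (i,Pc1)" using nm by simp
qed

lemma flip_bot:
  assumes v: "valid n (J,t,b)" and i: "i < n" and nm: "\<not> mid (J i) (J (Suc i))"
  shows "valid n (J, t, b(i := \<not> b i)) \<and> (\<forall>p. sel (J,t,b) p \<and> p \<notin> Dbot i \<longrightarrow> sel (J, t, b(i := \<not> b i)) p)
    \<and> sel (J,t,b) (i,Pc2) \<noteq> sel (J, t, b(i := \<not> b i)) (i,Pc2)"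
proof (intro conjI)
  show "valid n (J, t, b(i := \<not> b i))" using v nm by (auto simp: lv_def)
  show "\<forall>p. sel (J,t,b) p \<and> p \<notin> Dbot i \<longrightarrow> sel (J, t, b(i := \<not> b i)) p"
  proof (intro allI impI)
    fix p assume p: "sel (J,t,b) p \<and> p \<notin> Dbot i"
    obtain j k where jk: "p = (j,k)" by (cases p)
    show "sel (J, t, b(i := \<not> b i)) p"
    proof (cases "j = i")
      case True then show ?thesis using p jk nm by (cases k) (auto simp: Dbot_def)
    next
      case False then show ?thesis using p jk by simp
    qed
  qed
  show "sel (J,t,b) (i,Pc2) \<noteq> sel (J, t, b(i := \<not> b i)) (i,Pc2)" using nm by simp
qed

lemma flip_R:
  assumes v: "valid n (J,t,b)" and i: "i < n" and R: "J i = SR"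
  shows "valid n (J(i := SE), t(i := True), b(i := True)) \<and>
    (\<forall>p. sel (J,t,b) p \<and> p \<notin> DR i \<longrightarrow> sel (J(i := SE), t(i := True), b(i := True)) p)
    \<and> sel (J,t,b) (i,Mid) \<noteq> sel (J(i := SE), t(i := True), b(i := True)) (i,Mid)"
proof -
  have lvi: "lv (J i) (t i) (b i) (J (Suc i))" using v i by simp
  then have r: "J (Suc i) \<noteq> SL" using R by (simp add: lv_def)
  have V: "valid n (J(i := SE), t(i := True), b(i := True))"
  proof -
    have "(J(i := SE)) 0 = SE \<or> (J(i := SE)) 0 = SR" using v by (cases i) auto
    moreover have "(J(i := SE)) n = SE \<or> (J(i := SE)) n = SL" using v i by auto
    moreover have "lv ((J(i := SE)) j) ((t(i := True)) j) ((b(i := True)) j) ((J(i := SE)) (Suc j))" if j: "j < n" for j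
    proof -
      have lvj: "lv (J j) (t j) (b j) (J (Suc j))" using v j by simp
      consider "j = i" | "Suc j = i" | "j \<noteq> i" "Suc j \<noteq> i" by blast
      then show ?thesis
      proof cases
        case 1 then show ?thesis using r by (simp add: lv_def mid_def)
      next
        case 2 then show ?thesis using lvj R by (auto simp: lv_def mid_def)
      next
        case 3 then show ?thesis using lvj by simp
      qed
    qed
    ultimately show ?thesis by simp
  qed
  have S: "\<forall>p. sel (J,t,b) p \<and> p \<notin> DR i \<longrightarrow> sel (J(i := SE), t(i := True), b(i := True)) p"
  proof (intro allI impI)
    fix p assume p: "sel (J,t,b) p \<and> p \<notin> DR i"
    obtain j k where jk: "p = (j,k)" by (cases p)
    consider "j = i" | "Suc j = i" | "j \<noteq> i" "Suc j \<noteq> i" by blast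
    then show "sel (J(i := SE), t(i := True), b(i := True)) p"
    proof cases
      case 1 then show ?thesis using p jk r R by (cases k) (auto simp: DR_def mid_def)
    next
      case 2 then show ?thesis using p jk R by (cases k) (auto simp: mid_def)
    next
      case 3 then show ?thesis using p jk by simp
    qed
  qed
  have "sel (J,t,b) (i,Mid) \<noteq> sel (J(i := SE), t(i := True), b(i := True)) (i,Mid)"
    using R r by (simp add: mid_def)
  then show ?thesis using V S by blast
qed

lemma flip_L:
  assumes v: "valid n (J,t,b)" and i: "i < n" and L: "J (Suc i) = SL"
  shows "valid n (J(Suc i := SE), t, b) \<and>
    (\<forall>p. sel (J,t,b) p \<and> p \<notin> DL i \<longrightarrow> sel (J(Suc i := SE), t, b) p)
    \<and> sel (J,t,b) (i,Mid) \<noteq> sel (J(Suc i := SE), t, b) (i,Mid)"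
proof -
  have lvi: "lv (J i) (t i) (b i) (J (Suc i))" using v i by simp
  then have l: "J i \<noteq> SR" and tb: "\<not> t i" "\<not> b i" using L by (auto simp: lv_def mid_def)
  have V: "valid n (J(Suc i := SE), t, b)"
  proof -
    have "(J(Suc i := SE)) 0 = SE \<or> (J(Suc i := SE)) 0 = SR" using v by auto
    moreover have "(J(Suc i := SE)) n = SE \<or> (J(Suc i := SE)) n = SL" using v i by auto
    moreover have "lv ((J(Suc i := SE)) j) (t j) (b j) ((J(Suc i := SE)) (Suc j))" if j: "j < n" for j
    proof -
      have lvj: "lv (J j) (t j) (b j) (J (Suc j))" using v j by simp
      consider "j = i" | "j = Suc i" | "j \<noteq> i" "j \<noteq> Suc i" by blast
      then show ?thesis
      proof cases
        case 1 then show ?thesis using l by (simp add: lv_def mid_def)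
      next
        case 2 then show ?thesis using lvj L by (auto simp: lv_def mid_def)
      next
        case 3 then show ?thesis using lvj by simp
      qed
    qed
    ultimately show ?thesis by simp
  qed
  have S: "\<forall>p. sel (J,t,b) p \<and> p \<notin> DL i \<longrightarrow> sel (J(Suc i := SE), t, b) p"
  proof (intro allI impI)
    fix p assume p: "sel (J,t,b) p \<and> p \<notin> DL i"
    obtain j k where jk: "p = (j,k)" by (cases p)
    consider "j = i" | "j = Suc i" | "j \<noteq> i" "j \<noteq> Suc i" by blast
    then show "sel (J(Suc i := SE), t, b) p"
    proof cases
      case 1 then show ?thesis using p jk l L tb by (cases k) (auto simp: DL_def mid_def)
    next
      case 2 then show ?thesis using p jk L by (cases k) (auto simp: mid_def)
    next
      case 3 then show ?thesis using p jk by simp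
    qed
  qed
  have "sel (J,t,b) (i,Mid) \<noteq> sel (J(Suc i := SE), t, b) (i,Mid)"
    using L l by (simp add: mid_def)
  then show ?thesis using V S by blast
qed

lemma finite_Mw: "finite (Mw n w)"
  unfolding Mw_def using finite_EI by simp

lemma lower:
  assumes n: "0 < n" and v: "valid n w" and fs: "forcing_set (pyrene_V n) (pyrene_E n) (Mw n w) S"
  shows "wt n w \<le> card S"
proof -
  obtain J t b where w: "w = (J,t,b)" by (cases w)
  define Fr where "Fr i = ed ` ({i} \<times> (UNIV - {Vv}))" for i
  have SM: "S \<subseteq> Mw n w" using fs by (simp add: forcing_set_def)
  then have finS: "finite S" using finite_Mw finite_subset by blast
  have per: "(if mid (J i) (J (Suc i)) then 1 else 2) \<le> card (S \<inter> Fr i)" if i: "i < n" for i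
  proof (cases "mid (J i) (J (Suc i))")
    case False
    have v0: "valid n (J,t,b)" using v w by simp
    have "\<exists>e\<in>S. e \<in> ed ` Dtop i"
      apply (rule flip_lemma[OF n fs[unfolded w], where ?p0.0="(i,Pc1)" and ?w'="(J, t(i := \<not> t i), b)"])
      using flip_top[OF v0 i False] i by (auto simp: EI_def)
    then obtain e1 where e1: "e1 \<in> S" "e1 \<in> ed ` Dtop i" by blast
    have "\<exists>e\<in>S. e \<in> ed ` Dbot i"
      apply (rule flip_lemma[OF n fs[unfolded w], where ?p0.0="(i,Pc2)" and ?w'="(J, t, b(i := \<not> b i))"])
      using flip_bot[OF v0 i False] i by (auto simp: EI_def)
    then obtain e2 where e2: "e2 \<in> S" "e2 \<in> ed ` Dbot i" by blast
    have "e1 \<noteq> e2" using e1(2) e2(2) by (auto simp: Dtop_def Dbot_def ed_inj)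
    moreover have "e1 \<in> S \<inter> Fr i" "e2 \<in> S \<inter> Fr i" using e1 e2 by (auto simp: Fr_def Dtop_def Dbot_def)
    ultimately have "card {e1,e2} \<le> card (S \<inter> Fr i)" using finS by (intro card_mono) auto
    then show ?thesis using False \<open>e1 \<noteq> e2\<close> by simp
  next
    case True
    have v0: "valid n (J,t,b)" using v w by simp
    have "\<exists>e. e \<in> S \<inter> Fr i"
    proof (cases "J i = SR")
      case R: True
      have "\<exists>e\<in>S. e \<in> ed ` DR i"
        apply (rule flip_lemma[OF n fs[unfolded w], where ?p0.0="(i,Mid)" and ?w'="(J(i := SE), t(i := True), b(i := True))"])
        using flip_R[OF v0 i R] i by (auto simp: EI_def)
      then obtain e where "e \<in> S" "e \<in> ed ` DR i" by blast
      then show ?thesis by (auto simp: Fr_def DR_def)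
    next
      case False
      then have L: "J (Suc i) = SL" using True by (simp add: mid_def)
      have "\<exists>e\<in>S. e \<in> ed ` DL i"
        apply (rule flip_lemma[OF n fs[unfolded w], where ?p0.0="(i,Mid)" and ?w'="(J(Suc i := SE), t, b)"])
        using flip_L[OF v0 i L] i by (auto simp: EI_def)
      then obtain e where "e \<in> S" "e \<in> ed ` DL i" by blast
      then show ?thesis by (auto simp: Fr_def DL_def)
    qed
    then have "S \<inter> Fr i \<noteq> {}" by blast
    then have "0 < card (S \<inter> Fr i)" using finS by (simp add: card_gt_0_iff)
    then show ?thesis using True by simp
  qed
  have disj: "\<forall>i\<in>{..<n}. \<forall>j\<in>{..<n}. i \<noteq> j \<longrightarrow> (S \<inter> Fr i) \<inter> (S \<inter> Fr j) = {}"
    by (auto simp: Fr_def ed_inj)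
  have "wt n w = (\<Sum>i<n. if mid (J i) (J (Suc i)) then 1 else 2)" using w by simp
  also have "\<dots> \<le> (\<Sum>i<n. card (S \<inter> Fr i))" using per by (intro sum_mono) auto
  also have "\<dots> = card (\<Union>i<n. S \<inter> Fr i)"
    using disj finS by (intro card_UN_disjoint[symmetric]) auto
  also have "\<dots> \<le> card S" using finS by (intro card_mono) auto
  finally show ?thesis .
qed

fun pk :: "word \<Rightarrow> nat \<Rightarrow> et set" where
  "pk (J,t,b) i = (if J i = SR then {Ea1} else if J (Suc i) = SL then {Tc1}
     else {if t i then Pc1 else CT1, if b i then Pc2 else CT2})"

definition Sf :: "nat \<Rightarrow> word \<Rightarrow> vert set set" where
  "Sf n w = ed ` (SIGMA i:{..<n}. pk w i)"

lemma card_pk: "card (pk (J,t,b) i) = (if mid (J i) (J (Suc i)) then 1 else 2)"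
  by (auto simp: mid_def)

lemma card_Sf: "card (Sf n w) = wt n w"
proof -
  obtain J t b where w: "w = (J,t,b)" by (cases w)
  have "card (Sf n w) = card (SIGMA i:{..<n}. pk w i)"
    unfolding Sf_def by (rule card_image) (simp add: inj_on_def ed_inj)
  also have "\<dots> = (\<Sum>i<n. card (pk w i))" by (rule card_SigmaI) (auto simp: w)
  also have "\<dots> = wt n w" using w card_pk by simp
  finally show ?thesis .
qed

lemma determ:
  assumes v: "valid n (J,t,b)" and c: "canon n (J,t,b)" and v': "valid n (J',t',b')" and c': "canon n (J',t',b')"
    and P: "\<forall>i<n. \<forall>k\<in>pk (J,t,b) i. sel (J',t',b') (i,k)"
  shows "J' = J \<and> t' = t \<and> b' = b"
proof -
  have PR: "J' i = SR" if "i < n" "J i = SR" for i using P that by auto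
  have PL: "J' (Suc i) = SL" if "i < n" "J i \<noteq> SR" "J (Suc i) = SL" for i using P that by auto
  have PN: "\<not> mid (J' i) (J' (Suc i)) \<and> t' i = t i \<and> b' i = b i"
    if "i < n" "\<not> mid (J i) (J (Suc i))" for i
    using P that by (cases "t i"; cases "b i"; auto simp: mid_def)
  have lv: "lv (J i) (t i) (b i) (J (Suc i))" if "i < n" for i using v that by simp
  have lv': "lv (J' i) (t' i) (b' i) (J' (Suc i))" if "i < n" for i using v' that by simp
  have JJ: "J' i = J i" if "i \<le> n" for i
  proof (cases "J i")
    case SR
    then have "i < n" using v that by (cases "i = n") auto
    then show ?thesis using PR SR by simp
  next
    case SL
    then obtain j where j: "i = Suc j" using v by (cases i) auto
    then have "j < n" using that by simp
    moreover have "J j \<noteq> SR" using lv[OF \<open>j < n\<close>] SL j by (auto simp: lv_def)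
    ultimately show ?thesis using PL SL j by simp
  next
    case SE
    have nL: "J' i \<noteq> SL"
    proof (cases i)
      case 0 then show ?thesis using v' by auto
    next
      case (Suc j)
      then have j: "j < n" using that by simp
      show ?thesis
      proof (cases "mid (J j) (J (Suc j))")
        case True
        then have "J j = SR" using SE Suc by (simp add: mid_def)
        then have "J' j = SR" using PR j by simp
        then show ?thesis using lv'[OF j] Suc by (auto simp: lv_def)
      next
        case False
        then show ?thesis using PN[OF j] Suc by (auto simp: mid_def)
      qed
    qed
    have nR: "J' i \<noteq> SR"
    proof (cases "i = n")
      case True then show ?thesis using v' by auto
    next
      case False
      then have i: "i < n" using that by simp
      show ?thesis
      proof (cases "mid (J i) (J (Suc i))")
        case True
        then have "J (Suc i) = SL" using SE by (simp add: mid_def)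
        then have "J' (Suc i) = SL" using PL i SE by simp
        then show ?thesis using lv'[OF i] by (auto simp: lv_def)
      next
        case False
        then show ?thesis using PN[OF i] by (auto simp: mid_def)
      qed
    qed
    show ?thesis using nL nR SE by (cases "J' i") auto
  qed
  have J: "J' = J"
  proof
    fix i show "J' i = J i"
    proof (cases "i \<le> n")
      case True then show ?thesis by (rule JJ)
    next
      case False then show ?thesis using c c' by simp
    qed
  qed
  have TB: "t' i = t i \<and> b' i = b i" for i
  proof (cases "i < n")
    case True
    show ?thesis
    proof (cases "mid (J i) (J (Suc i))")
      case False then show ?thesis using PN[OF True] by simp
    next
      case m: True
      then have "\<not> t i \<and> \<not> b i" using lv[OF True] by (simp add: lv_def)
      moreover have "\<not> t' i \<and> \<not> b' i" using lv'[OF True] m J by (simp add: lv_def)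
      ultimately show ?thesis by simp
    qed
  next
    case False then show ?thesis using c c' by simp
  qed
  show ?thesis using J TB by auto
qed

lemma Sf_forcing:
  assumes n: "0 < n" and v: "valid n w" and c: "canon n w"
  shows "forcing_set (pyrene_V n) (pyrene_E n) (Mw n w) (Sf n w)"
proof -
  obtain J t b where w: "w = (J,t,b)" by (cases w)
  have sub: "Sf n w \<subseteq> Mw n w"
  proof
    fix e assume "e \<in> Sf n w"
    then obtain i k where e: "e = ed (i,k)" "i < n" "k \<in> pk w i" by (auto simp: Sf_def)
    have lvi: "lv (J i) (t i) (b i) (J (Suc i))" using v w e(2) by simp
    have "sel w (i,k)" using e(3) lvi w by (auto simp: lv_def mid_def split: if_splits)
    then show "e \<in> Mw n w" using e by (simp add: mem_Mw EI_def)
  qed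
  have uniq: "M' = Mw n w" if pm: "perfect_matching (pyrene_V n) (pyrene_E n) M'" and S': "Sf n w \<subseteq> M'" for M'
  proof -
    obtain w' where w': "valid n w'" "canon n w'" "M' = Mw n w'" using pm_word[OF n pm] by blast
    obtain J' t' b' where w'e: "w' = (J',t',b')" by (cases w')
    have "\<forall>i<n. \<forall>k\<in>pk (J,t,b) i. sel (J',t',b') (i,k)"
    proof (intro allI impI ballI)
      fix i k assume "i < n" "k \<in> pk (J,t,b) i"
      then have "ed (i,k) \<in> Sf n w" using w by (auto simp: Sf_def)
      then have "ed (i,k) \<in> Mw n w'" using S' w' by auto
      then show "sel (J',t',b') (i,k)" using w'e by (simp add: mem_Mw)
    qed
    then have "J' = J \<and> t' = t \<and> b' = b" using determ v c w'(1,2) w w'e by blast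
    then show ?thesis using w' w w'e by simp
  qed
  show ?thesis unfolding forcing_set_def using sub uniq by blast
qed

lemma fnum:
  assumes n: "0 < n" and v: "valid n w" and c: "canon n w"
  shows "forcing_number (pyrene_V n) (pyrene_E n) (Mw n w) = wt n w"
  unfolding forcing_number_def
proof (rule Min_eqI)
  have "{S. forcing_set (pyrene_V n) (pyrene_E n) (Mw n w) S} \<subseteq> Pow (Mw n w)"
    by (auto simp: forcing_set_def)
  then show "finite (card ` {S. forcing_set (pyrene_V n) (pyrene_E n) (Mw n w) S})"
    using finite_Mw by (meson finite_Pow_iff finite_imageI finite_subset)
  show "wt n w \<le> y" if "y \<in> card ` {S. forcing_set (pyrene_V n) (pyrene_E n) (Mw n w) S}" for y
    using that lower[OF n v] by auto
  show "wt n w \<in> card ` {S. forcing_set (pyrene_V n) (pyrene_E n) (Mw n w) S}"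
    using Sf_forcing[OF n v c] card_Sf by (metis (mono_tags, lifting) image_eqI mem_Collect_eq)
qed

lemma sel_pk: "valid n w \<Longrightarrow> i < n \<Longrightarrow> k \<in> pk w i \<Longrightarrow> sel w (i,k)"
  by (cases w) (auto simp: lv_def mid_def split: if_splits)

lemma Mw_inj:
  assumes "valid n w" "canon n w" "valid n w'" "canon n w'" "Mw n w = Mw n w'"
  shows "w = w'"
proof -
  obtain J t b where w: "w = (J,t,b)" by (cases w)
  obtain J' t' b' where w': "w' = (J',t',b')" by (cases w')
  have "\<forall>i<n. \<forall>k\<in>pk (J,t,b) i. sel (J',t',b') (i,k)"
  proof (intro allI impI ballI)
    fix i k assume "i < n" "k \<in> pk (J,t,b) i"
    then have "sel w (i,k)" using sel_pk assms(1) w by blast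
    then have "ed (i,k) \<in> Mw n w" using \<open>i < n\<close> by (simp add: mem_Mw EI_def)
    then show "sel (J',t',b') (i,k)" using assms(5) w' by (simp add: mem_Mw)
  qed
  then show ?thesis using determ assms w w' by blast
qed


definition Wg :: "nat \<Rightarrow> st \<Rightarrow> word set" where
  "Wg n s = {(J,t,b). J 0 = s \<and> (\<forall>i<n. lv (J i) (t i) (b i) (J (Suc i))) \<and> (J n = SE \<or> J n = SL)
     \<and> canon n (J,t,b)}"

definition Q :: "nat \<Rightarrow> st \<Rightarrow> int poly" where
  "Q n s = (\<Sum>w\<in>Wg n s. monom 1 (wt n w))"

fun cw :: "st \<Rightarrow> bool \<Rightarrow> bool \<Rightarrow> word \<Rightarrow> word" where
  "cw s t0 b0 (J,t,b) = (case_nat s J, case_nat t0 t, case_nat b0 b)"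

definition LV :: "st \<Rightarrow> (st \<times> bool \<times> bool) set" where
  "LV s = {x. lv s (fst (snd x)) (snd (snd x)) (fst x)}"

lemma Wg_mem: "(J,t,b) \<in> Wg n s \<longleftrightarrow> J 0 = s \<and> (\<forall>i<n. lv (J i) (t i) (b i) (J (Suc i))) \<and>
  (J n = SE \<or> J n = SL) \<and> (\<forall>i>n. J i = SE) \<and> (\<forall>i\<ge>n. \<not> t i \<and> \<not> b i)"
  by (simp add: Wg_def)

lemma Wg_Suc: "Wg (Suc n) s = (\<Union>x\<in>LV s. cw s (fst (snd x)) (snd (snd x)) ` Wg n (fst x))"
proof (rule equalityI)
  show "Wg (Suc n) s \<subseteq> (\<Union>x\<in>LV s. cw s (fst (snd x)) (snd (snd x)) ` Wg n (fst x))"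
  proof
    fix w assume w: "w \<in> Wg (Suc n) s"
    obtain J t b where wj: "w = (J,t,b)" by (cases w)
    have J0: "J 0 = s" and lvs: "\<forall>i<Suc n. lv (J i) (t i) (b i) (J (Suc i))"
      and Jn: "J (Suc n) = SE \<or> J (Suc n) = SL" and c: "canon (Suc n) (J,t,b)"
      using w wj by (auto simp: Wg_def)
    define w0 where "w0 = ((\<lambda>i. J (Suc i)), (\<lambda>i. t (Suc i)), (\<lambda>i. b (Suc i)))"
    have eq: "cw s (t 0) (b 0) w0 = w"
    proof -
      have "case_nat s (\<lambda>i. J (Suc i)) = J" using J0 by (auto split: nat.splits)
      moreover have "case_nat (t 0) (\<lambda>i. t (Suc i)) = t" by (auto split: nat.splits)
      moreover have "case_nat (b 0) (\<lambda>i. b (Suc i)) = b" by (auto split: nat.splits)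
      ultimately show ?thesis by (simp add: w0_def wj)
    qed
    have w0W: "w0 \<in> Wg n (J 1)"
    proof -
      have "\<forall>i<n. lv (J (Suc i)) (t (Suc i)) (b (Suc i)) (J (Suc (Suc i)))" using lvs by simp
      moreover have "\<forall>i>n. J (Suc i) = SE" using c by simp
      moreover have "\<forall>i\<ge>n. \<not> t (Suc i) \<and> \<not> b (Suc i)" using c by simp
      ultimately show ?thesis using Jn by (simp add: Wg_def w0_def)
    qed
    have "(J 1, t 0, b 0) \<in> LV s" using lvs J0 by (auto simp: LV_def)
    moreover from w0W have "w \<in> cw s (fst (snd (J 1, t 0, b 0))) (snd (snd (J 1, t 0, b 0))) ` Wg n (fst (J 1, t 0, b 0))"
      using eq by (simp add: image_eqI[of w _ w0])
    ultimately show "w \<in> (\<Union>x\<in>LV s. cw s (fst (snd x)) (snd (snd x)) ` Wg n (fst x))"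
      by (rule UN_I)
  qed
next
  show "(\<Union>x\<in>LV s. cw s (fst (snd x)) (snd (snd x)) ` Wg n (fst x)) \<subseteq> Wg (Suc n) s"
  proof
    fix w assume "w \<in> (\<Union>x\<in>LV s. cw s (fst (snd x)) (snd (snd x)) ` Wg n (fst x))"
    then obtain x where x0: "x \<in> LV s" and "w \<in> cw s (fst (snd x)) (snd (snd x)) ` Wg n (fst x)" by blast
    then obtain w0 where w00: "w0 \<in> Wg n (fst x)" and we0: "w = cw s (fst (snd x)) (snd (snd x)) w0" by blast
    obtain s' t0 b0 where xe: "x = (s', t0, b0)" by (cases x)
    have x: "(s', t0, b0) \<in> LV s" and w0: "w0 \<in> Wg n s'" and we: "w = cw s t0 b0 w0"
      using x0 w00 we0 xe by simp_all
    obtain J t b where w0e: "w0 = (J,t,b)" by (cases w0)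
    have lv0: "lv s t0 b0 s'" using x by (simp add: LV_def)
    have J0: "J 0 = s'" and lvs: "\<forall>i<n. lv (J i) (t i) (b i) (J (Suc i))"
      and Jn: "J n = SE \<or> J n = SL" and c: "canon n (J,t,b)" using w0 w0e by (auto simp: Wg_def)
    have "\<forall>i<Suc n. lv (case_nat s J i) (case_nat t0 t i) (case_nat b0 b i) (case_nat s J (Suc i))"
    proof (intro allI impI)
      fix i assume "i < Suc n"
      then show "lv (case_nat s J i) (case_nat t0 t i) (case_nat b0 b i) (case_nat s J (Suc i))"
        using lv0 J0 lvs by (cases i) auto
    qed
    moreover have "\<forall>i>Suc n. case_nat s J i = SE"
    proof (intro allI impI)
      fix i assume "Suc n < i" then show "case_nat s J i = SE" using c by (cases i) auto
    qed
    moreover have "\<forall>i\<ge>Suc n. \<not> case_nat t0 t i \<and> \<not> case_nat b0 b i"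
    proof (intro allI impI)
      fix i assume "Suc n \<le> i" then show "\<not> case_nat t0 t i \<and> \<not> case_nat b0 b i" using c by (cases i) auto
    qed
    moreover have "case_nat s J (Suc n) = SE \<or> case_nat s J (Suc n) = SL" using Jn by simp
    moreover have "case_nat s J 0 = s" by simp
    ultimately have "cw s t0 b0 w0 \<in> Wg (Suc n) s"
      unfolding w0e cw.simps Wg_mem by blast
    then show "w \<in> Wg (Suc n) s" using we by simp
  qed
qed

lemma wt_cw: "w \<in> Wg n s' \<Longrightarrow> wt (Suc n) (cw s t0 b0 w) = (if mid s s' then 1 else 2) + wt n w"
  by (cases w) (simp add: Wg_def sum.lessThan_Suc_shift del: sum.lessThan_Suc)

lemma inj_cw: "inj (cw s t0 b0)"
proof (rule injI)
  fix w w' assume eq: "cw s t0 b0 w = cw s t0 b0 w'"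
  obtain J t b where w: "w = (J,t,b)" by (cases w)
  obtain J' t' b' where w': "w' = (J',t',b')" by (cases w')
  have "case_nat s J = case_nat s J'" "case_nat t0 t = case_nat t0 t'" "case_nat b0 b = case_nat b0 b'"
    using eq w w' by auto
  then have "J = J'" "t = t'" "b = b'"
    by (metis nat.simps(5) ext)+
  then show "w = w'" using w w' by simp
qed

lemma finite_st: "finite (UNIV :: st set)"
proof -
  have eq: "(UNIV :: st set) = {SE, SL, SR}" by (auto intro: st.exhaust)
  show ?thesis by (subst eq) simp
qed

instance st :: finite
  by standard (rule finite_st)

lemma finite_LV: "finite (LV s)"
  by (rule finite_subset[OF subset_UNIV]) simp

lemma finite_Wg: "finite (Wg n s)"
proof (induction n arbitrary: s)
  case 0
  have "Wg 0 s \<subseteq> {((\<lambda>i. if i = 0 then s else SE), (\<lambda>_. False), (\<lambda>_. False))}"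
  proof
    fix w assume "w \<in> Wg 0 s"
    then obtain J t b where w: "w = (J,t,b)" "J 0 = s" "\<forall>i>0. J i = SE" "\<forall>i. \<not> t i \<and> \<not> b i"
      by (auto simp: Wg_def)
    then have "J = (\<lambda>i. if i = 0 then s else SE)" "t = (\<lambda>_. False)" "b = (\<lambda>_. False)" by auto
    then show "w \<in> {((\<lambda>i. if i = 0 then s else SE), (\<lambda>_. False), (\<lambda>_. False))}" using w by simp
  qed
  then show ?case using finite_subset by blast
next
  case (Suc n)
  show ?case unfolding Wg_Suc using finite_LV Suc by blast
qed

lemma Q_Suc: "Q (Suc n) s = (\<Sum>x\<in>LV s. monom 1 (if mid s (fst x) then 1 else 2) * Q n (fst x))"
proof -
  have "Q (Suc n) s = (\<Sum>x\<in>LV s. \<Sum>w\<in>cw s (fst (snd x)) (snd (snd x)) ` Wg n (fst x). monom 1 (wt (Suc n) w))"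
    unfolding Q_def Wg_Suc
  proof (rule sum.UNION_disjoint)
    show "finite (LV s)" by (rule finite_LV)
    show "\<forall>x\<in>LV s. finite (cw s (fst (snd x)) (snd (snd x)) ` Wg n (fst x))" using finite_Wg by blast
    show "\<forall>x\<in>LV s. \<forall>y\<in>LV s. x \<noteq> y \<longrightarrow>
      cw s (fst (snd x)) (snd (snd x)) ` Wg n (fst x) \<inter> cw s (fst (snd y)) (snd (snd y)) ` Wg n (fst y) = {}"
    proof (intro ballI impI)
      fix x y assume "x \<in> LV s" "y \<in> LV s" "x \<noteq> y"
      obtain s1 t1 b1 where x: "x = (s1,t1,b1)" by (cases x)
      obtain s2 t2 b2 where y: "y = (s2,t2,b2)" by (cases y)
      show "cw s (fst (snd x)) (snd (snd x)) ` Wg n (fst x) \<inter> cw s (fst (snd y)) (snd (snd y)) ` Wg n (fst y) = {}"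
      proof (rule ccontr)
        assume "\<not> ?thesis"
        then obtain z where "z \<in> cw s t1 b1 ` Wg n s1" "z \<in> cw s t2 b2 ` Wg n s2" using x y by auto
        then obtain w1 w2 where w1: "w1 \<in> Wg n s1" and w2: "w2 \<in> Wg n s2" and eq: "cw s t1 b1 w1 = cw s t2 b2 w2"
          by blast
        obtain J t b where w1e: "w1 = (J,t,b)" by (cases w1)
        obtain J' t' b' where w2e: "w2 = (J',t',b')" by (cases w2)
        have "J 0 = s1" "J' 0 = s2" using w1 w2 w1e w2e by (auto simp: Wg_def)
        moreover have "case_nat s J 1 = case_nat s J' 1" "case_nat t1 t 0 = case_nat t2 t' 0" "case_nat b1 b 0 = case_nat b2 b' 0"
          using eq w1e w2e by auto
        ultimately have "s1 = s2" "t1 = t2" "b1 = b2" by auto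
        then show False using x y \<open>x \<noteq> y\<close> by simp
      qed
    qed
  qed
  also have "\<dots> = (\<Sum>x\<in>LV s. monom 1 (if mid s (fst x) then 1 else 2) * Q n (fst x))"
  proof (rule sum.cong[OF refl])
    fix x assume "x \<in> LV s"
    have "(\<Sum>w\<in>cw s (fst (snd x)) (snd (snd x)) ` Wg n (fst x). monom (1::int) (wt (Suc n) w))
      = (\<Sum>w\<in>Wg n (fst x). monom 1 (wt (Suc n) (cw s (fst (snd x)) (snd (snd x)) w)))"
      by (rule sum.reindex_cong[OF inj_on_subset[OF inj_cw subset_UNIV] refl refl])
    also have "\<dots> = (\<Sum>w\<in>Wg n (fst x). monom 1 (if mid s (fst x) then 1 else 2) * monom 1 (wt n w))"
      by (rule sum.cong[OF refl]) (simp add: wt_cw mult_monom)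
    also have "\<dots> = monom 1 (if mid s (fst x) then 1 else 2) * Q n (fst x)"
      by (simp add: Q_def sum_distrib_left)
    finally show "(\<Sum>w\<in>cw s (fst (snd x)) (snd (snd x)) ` Wg n (fst x). monom 1 (wt (Suc n) w))
      = monom 1 (if mid s (fst x) then 1 else 2) * Q n (fst x)" .
  qed
  finally show ?thesis .
qed

lemma LV_SE: "LV SE = {(SE,False,False),(SE,False,True),(SE,True,False),(SE,True,True),(SL,False,False),
  (SR,False,False),(SR,False,True),(SR,True,False),(SR,True,True)}"
  unfolding LV_def lv_def mid_def
  apply (rule set_eqI)
  subgoal for x by (cases x; case_tac a; auto)
  done

lemma LV_SL: "LV SL = {(SE,False,False),(SE,False,True),(SE,True,False),(SE,True,True),(SL,False,False),
  (SR,False,False),(SR,False,True),(SR,True,False),(SR,True,True)}"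
  unfolding LV_def lv_def mid_def
  apply (rule set_eqI)
  subgoal for x by (cases x; case_tac a; auto)
  done

lemma LV_SR: "LV SR = {(SE,False,False),(SR,False,False)}"
  unfolding LV_def lv_def mid_def
  apply (rule set_eqI)
  subgoal for x by (cases x; case_tac a; auto)
  done

lemma Q_SE: "Q (Suc n) SE = 4 * monom 1 2 * Q n SE + monom 1 1 * Q n SL + 4 * monom 1 2 * Q n SR"
  unfolding Q_Suc LV_SE by (simp add: mid_def algebra_simps)

lemma Q_SL: "Q (Suc n) SL = 4 * monom 1 2 * Q n SE + monom 1 1 * Q n SL + 4 * monom 1 2 * Q n SR"
  unfolding Q_Suc LV_SL by (simp add: mid_def algebra_simps)

lemma Q_SR: "Q (Suc n) SR = monom 1 1 * Q n SE + monom 1 1 * Q n SR"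
  unfolding Q_Suc LV_SR by (simp add: mid_def algebra_simps)

lemma Q_0: "Q 0 SE = 1" "Q 0 SL = 1" "Q 0 SR = 0"
proof -
  have "Wg 0 s = {((\<lambda>i. if i = 0 then s else SE), (\<lambda>_. False), (\<lambda>_. False))}" if "s = SE \<or> s = SL" for s
  proof
    show "Wg 0 s \<subseteq> {((\<lambda>i. if i = 0 then s else SE), (\<lambda>_. False), (\<lambda>_. False))}"
    proof
      fix w assume "w \<in> Wg 0 s"
      then obtain J t b where w: "w = (J,t,b)" "J 0 = s" "\<forall>i>0. J i = SE" "\<forall>i. \<not> t i \<and> \<not> b i"
        by (auto simp: Wg_def)
      then have "J = (\<lambda>i. if i = 0 then s else SE)" "t = (\<lambda>_. False)" "b = (\<lambda>_. False)" by auto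
      then show "w \<in> {((\<lambda>i. if i = 0 then s else SE), (\<lambda>_. False), (\<lambda>_. False))}" using w by simp
    qed
    show "{((\<lambda>i. if i = 0 then s else SE), (\<lambda>_. False), (\<lambda>_. False))} \<subseteq> Wg 0 s"
      using that by (auto simp: Wg_def)
  qed
  then show "Q 0 SE = 1" "Q 0 SL = 1" by (simp_all add: Q_def)
  have "Wg 0 SR = {}" by (auto simp: Wg_def)
  then show "Q 0 SR = 0" by (simp add: Q_def)
qed


definition AA :: "int poly" where "AA = [:2,4:]"

definition fk :: "nat \<Rightarrow> nat \<Rightarrow> int poly" where
  "fk n k = smult ((-1)^k * int ((n - k) choose k)) (AA ^ (n - 2*k))"

definition VV :: "nat \<Rightarrow> int poly" where
  "VV n = (\<Sum>k\<le>n. fk n k)"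

lemma fk_zero: "n < 2*k \<Longrightarrow> fk n k = 0"
  by (simp add: fk_def binomial_eq_0)

lemma pascal_aux: "k \<le> Suc n \<Longrightarrow> int ((Suc n - k) choose (Suc k)) = int ((n - k) choose (Suc k)) + int ((n - k) choose k)"
proof (cases "k \<le> n")
  case True
  then have "Suc n - k = Suc (n - k)" by simp
  then show ?thesis by simp
next
  case False
  assume "k \<le> Suc n"
  with False have "k = Suc n" by simp
  then show ?thesis by simp
qed

lemma fk_term: "k \<le> Suc n \<Longrightarrow> fk (Suc (Suc n)) (Suc k) = AA * fk (Suc n) (Suc k) - fk n k"
proof -
  assume k: "k \<le> Suc n"
  have a1: "Suc (Suc n) - Suc k = Suc n - k" by simp
  have a2: "Suc (Suc n) - 2 * Suc k = n - 2 * k" by simp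
  have a3: "Suc n - Suc k = n - k" by simp
  have a4: "Suc n - 2 * Suc k = n - Suc (2 * k)" by simp
  have m: "(-1::int) ^ Suc k = - ((-1) ^ k)" by simp
  have e1: "fk (Suc (Suc n)) (Suc k) = smult (- ((-1)^k * int ((Suc n - k) choose Suc k))) (AA ^ (n - 2*k))"
    unfolding fk_def a1 a2 m by simp
  have e2: "AA * fk (Suc n) (Suc k) = smult (- ((-1)^k * int ((n - k) choose Suc k))) (AA ^ (n - 2*k))"
  proof (cases "Suc (2*k) \<le> n")
    case True
    then have "AA * AA ^ (n - Suc (2 * k)) = AA ^ (n - 2*k)"
      by (metis Suc_diff_le diff_Suc_Suc power_Suc)
    then show ?thesis unfolding fk_def a3 a4 m by (simp add: mult_smult_right)
  next
    case False
    then have "n - k < Suc k" by simp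
    then have z: "(n - k) choose Suc k = 0" by (simp add: binomial_eq_0)
    show ?thesis unfolding fk_def a3 a4 m z by simp
  qed
  have e3: "fk n k = smult ((-1)^k * int ((n - k) choose k)) (AA ^ (n - 2*k))" by (simp add: fk_def)
  show ?thesis unfolding e1 e2 e3 pascal_aux[OF k]
    by (simp only: distrib_left minus_add smult_add_left smult_minus_left diff_conv_add_uminus add.commute)
qed

lemma VV_rec: "VV (Suc (Suc n)) = AA * VV (Suc n) - VV n"
proof -
  have "VV (Suc (Suc n)) = fk (Suc (Suc n)) 0 + (\<Sum>k\<le>Suc n. fk (Suc (Suc n)) (Suc k))"
    unfolding VV_def by (rule sum.atMost_Suc_shift)
  also have "(\<Sum>k\<le>Suc n. fk (Suc (Suc n)) (Suc k)) = (\<Sum>k\<le>Suc n. AA * fk (Suc n) (Suc k) - fk n k)"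
    by (rule sum.cong) (auto simp: fk_term)
  also have "\<dots> = (\<Sum>k\<le>Suc n. AA * fk (Suc n) (Suc k)) - (\<Sum>k\<le>Suc n. fk n k)"
    by (simp add: sum_subtractf)
  also have "(\<Sum>k\<le>Suc n. fk n k) = VV n"
    by (simp add: VV_def fk_zero)
  also have "(\<Sum>k\<le>Suc n. AA * fk (Suc n) (Suc k)) = (\<Sum>k\<le>n. AA * fk (Suc n) (Suc k))"
    by (simp add: fk_zero)
  also have "fk (Suc (Suc n)) 0 = AA * fk (Suc n) 0" by (simp add: fk_def)
  finally have "VV (Suc (Suc n)) = AA * fk (Suc n) 0 + (\<Sum>k\<le>n. AA * fk (Suc n) (Suc k)) - VV n"
    by simp
  also have "AA * fk (Suc n) 0 + (\<Sum>k\<le>n. AA * fk (Suc n) (Suc k)) = AA * VV (Suc n)"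
    unfolding VV_def sum.atMost_Suc_shift[of "fk (Suc n)" n] by (simp add: sum_distrib_left algebra_simps)
  finally show ?thesis .
qed

lemma VV_0: "VV 0 = 1" by (simp add: VV_def fk_def)
lemma VV_1: "VV 1 = AA" by (simp add: VV_def fk_def)

lemma smult_sum_right: "smult c (\<Sum>i\<in>S. f i) = (\<Sum>i\<in>S. smult c (f i))"
  by (induction S rule: infinite_finite_induct) (simp_all add: smult_add_right)

lemma binom_poly: "[:1,2:]^m = (\<Sum>j\<le>m. monom (int (m choose j) * 2^j) j)"
proof -
  have e: "[:1,2::int:] = monom 2 1 + 1" by (simp add: monom_Suc monom_0 one_pCons)
  have "(monom (2::int) 1 + 1)^m = (\<Sum>j\<le>m. of_nat (m choose j) * monom 2 1 ^ j * 1 ^ (m - j))"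
    by (rule binomial_ring)
  also have "\<dots> = (\<Sum>j\<le>m. monom (int (m choose j) * 2^j) j)"
  proof (rule sum.cong[OF refl])
    fix j
    have "(of_nat (m choose j) :: int poly) = monom (int (m choose j)) 0" by (simp add: of_nat_poly monom_0)
    then show "of_nat (m choose j) * monom (2::int) 1 ^ j * 1 ^ (m - j) = monom (int (m choose j) * 2^j) j"
      by (simp add: monom_power mult_monom)
  qed
  finally show ?thesis using e by simp
qed

lemma inner_i:
  assumes "n \<le> 2*i"
  shows "(\<Sum>j=0..2*i-n. monom ((-1) ^ (n - i) * 2 ^ (2 * i + j - n) * int (i choose (n - i)) * int ((2 * i - n) choose j)) j)
    = smult ((-1) ^ (n - i) * int (i choose (n - i))) (AA ^ (2*i - n))"
proof -
  define m where "m = 2*i - n"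
  have ex: "2 * i + j - n = m + j" for j using assms by (simp add: m_def)
  have "AA ^ m = smult (2^m) ([:1,2:]^m)"
  proof -
    have e: "AA = smult 2 [:1,2:]" by (simp add: AA_def)
    show ?thesis unfolding e by (rule smult_power)
  qed
  also have "\<dots> = (\<Sum>j\<le>m. monom (2^m * (int (m choose j) * 2^j)) j)"
    by (simp add: binom_poly smult_sum_right smult_monom)
  finally have A: "AA ^ m = (\<Sum>j\<le>m. monom (2^m * (int (m choose j) * 2^j)) j)" .
  show ?thesis unfolding m_def[symmetric] ex A atLeast0AtMost
    by (simp add: smult_sum_right smult_monom power_add algebra_simps)
qed

lemma inner_eq:
  "(\<Sum>j = 0..n. \<Sum>i = (j + n + 1) div 2..n.
      monom ((-1) ^ (n - i) * 2 ^ (2 * i + j - n) * int (i choose (n - i))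
             * int ((2 * i - n) choose j)) j) = VV n"
proof -
  define g where "g i j = monom ((-1) ^ (n - i) * 2 ^ (2 * i + j - n) * int (i choose (n - i))
             * int ((2 * i - n) choose j)) j" for i j
  have s1: "{i. i \<in> {0..n} \<and> (j + n + 1) div 2 \<le> i} = {(j + n + 1) div 2..n}" for j by auto
  have "(\<Sum>j = 0..n. \<Sum>i = (j + n + 1) div 2..n. g i j) = (\<Sum>j\<in>{0..n}. \<Sum>i\<in>{i. i \<in> {0..n} \<and> (j + n + 1) div 2 \<le> i}. g i j)"
    by (simp only: s1)
  also have "\<dots> = (\<Sum>i\<in>{0..n}. \<Sum>j\<in>{j. j \<in> {0..n} \<and> (j + n + 1) div 2 \<le> i}. g i j)"
    by (rule sum.swap_restrict) auto
  also have "\<dots> = (\<Sum>i\<in>{0..n}. smult ((-1) ^ (n - i) * int (i choose (n - i))) (AA ^ (2*i - n)))"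
  proof (rule sum.cong[OF refl])
    fix i assume i: "i \<in> {0..n}"
    show "(\<Sum>j\<in>{j. j \<in> {0..n} \<and> (j + n + 1) div 2 \<le> i}. g i j) = smult ((-1) ^ (n - i) * int (i choose (n - i))) (AA ^ (2*i - n))"
    proof (cases "n \<le> 2*i")
      case True
      have "{j. j \<in> {0..n} \<and> (j + n + 1) div 2 \<le> i} = {0..2*i-n}" using True i by auto
      then show ?thesis using inner_i[OF True] by (simp add: g_def)
    next
      case False
      have e1: "{j. j \<in> {0..n} \<and> (j + n + 1) div 2 \<le> i} = {}" using False by auto
      have e2: "i choose (n - i) = 0" using False by (simp add: binomial_eq_0)
      show ?thesis unfolding e1 e2 by simp
    qed
  qed
  also have "\<dots> = (\<Sum>i\<in>{0..n}. smult ((-1) ^ (n - (n + 0 - i)) * int ((n + 0 - i) choose (n - (n + 0 - i)))) (AA ^ (2*(n + 0 - i) - n)))"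
    by (rule sum.atLeastAtMost_rev)
  also have "\<dots> = VV n"
    unfolding VV_def atLeast0AtMost[symmetric]
  proof (rule sum.cong[OF refl])
    fix k assume "k \<in> {0..n}"
    then have k: "k \<le> n" by simp
    have "n - (n + 0 - k) = k" "n + 0 - k = n - k" "2*(n + 0 - k) - n = n - 2*k" using k by auto
    then show "smult ((-1) ^ (n - (n + 0 - k)) * int ((n + 0 - k) choose (n - (n + 0 - k)))) (AA ^ (2*(n + 0 - k) - n)) = fk n k"
      by (simp add: fk_def)
  qed
  finally show ?thesis unfolding g_def .
qed


lemma Q_SL_eq: "Q n SL = Q n SE"
  by (cases n) (simp_all add: Q_0 Q_SE Q_SL)

definition U :: "nat \<Rightarrow> int poly" where "U n = Q n SE + Q n SR"

lemma mx: "monom (1::int) 2 = [:0,1:]^2" "monom (1::int) 1 = [:0,1:]"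
  by (simp_all add: monom_altdef)

lemma AA_x: "AA = 2 + 4 * [:0,1:]"
  by (simp add: AA_def numeral_poly)

lemma U_rec: "U (Suc (Suc n)) = (2 * [:0,1:] + 4 * [:0,1:]^2) * U (Suc n) - [:0,1:]^2 * U n"
  unfolding U_def Q_SE Q_SR Q_SL_eq mx by algebra

lemma U_closed: "U n = [:0,1:]^n * VV n \<and> U (Suc n) = [:0,1:]^(Suc n) * VV (Suc n)"
proof (induction n)
  case 0
  have "U 0 = 1" unfolding U_def Q_0 by simp
  moreover have "U (Suc 0) = [:0,1:] * AA"
    unfolding U_def Q_SE Q_SR Q_0 mx AA_x by algebra
  ultimately show ?case by (simp add: VV_0 VV_1[unfolded One_nat_def])
next
  case (Suc n)
  have "U (Suc (Suc n)) = (2 * [:0,1:] + 4 * [:0,1:]^2) * ([:0,1:]^(Suc n) * VV (Suc n)) - [:0,1:]^2 * ([:0,1:]^n * VV n)"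
    unfolding U_rec by (simp only: Suc.IH[THEN conjunct1] Suc.IH[THEN conjunct2])
  also have "\<dots> = [:0,1:]^(Suc (Suc n)) * VV (Suc (Suc n))"
    unfolding VV_rec AA_x power_Suc by algebra
  finally show ?case using Suc.IH[THEN conjunct2] by blast
qed

lemma fp_sum:
  assumes n: "0 < n"
  shows "forcing_polynomial (pyrene_V n) (pyrene_E n) = U n"
proof -
  define W where "W = {w. valid n w \<and> canon n w}"
  have PM: "perfect_matchings (pyrene_V n) (pyrene_E n) = Mw n ` W"
  proof
    show "perfect_matchings (pyrene_V n) (pyrene_E n) \<subseteq> Mw n ` W"
    proof
      fix M assume "M \<in> perfect_matchings (pyrene_V n) (pyrene_E n)"
      then have "perfect_matching (pyrene_V n) (pyrene_E n) M" by (simp add: perfect_matchings_def)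
      then obtain w where "valid n w" "canon n w" "M = Mw n w" using pm_word[OF n] by blast
      then show "M \<in> Mw n ` W" unfolding W_def by blast
    qed
    show "Mw n ` W \<subseteq> perfect_matchings (pyrene_V n) (pyrene_E n)"
      using valid_pm[OF n] by (auto simp: perfect_matchings_def W_def)
  qed
  have inj: "inj_on (Mw n) W"
  proof (rule inj_onI)
    fix w w' assume "w \<in> W" "w' \<in> W" "Mw n w = Mw n w'"
    then show "w = w'" using Mw_inj unfolding W_def by blast
  qed
  have "forcing_polynomial (pyrene_V n) (pyrene_E n) = (\<Sum>w\<in>W. monom 1 (forcing_number (pyrene_V n) (pyrene_E n) (Mw n w)))"
    unfolding forcing_polynomial_def PM by (rule sum.reindex[OF inj, unfolded comp_def])
  also have "\<dots> = (\<Sum>w\<in>W. monom 1 (wt n w))"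
    by (rule sum.cong[OF refl]) (simp add: W_def fnum[OF n])
  also have "W = Wg n SE \<union> Wg n SR"
  proof (rule set_eqI)
    fix w :: word
    obtain J t b where w: "w = (J,t,b)" by (cases w)
    show "w \<in> W \<longleftrightarrow> w \<in> Wg n SE \<union> Wg n SR"
      unfolding w W_def by (auto simp: Wg_def)
  qed
  also have "(\<Sum>w\<in>Wg n SE \<union> Wg n SR. monom (1::int) (wt n w)) = Q n SE + Q n SR"
    unfolding Q_def
  proof (rule sum.union_disjoint)
    show "finite (Wg n SE)" "finite (Wg n SR)" by (rule finite_Wg)+
    show "Wg n SE \<inter> Wg n SR = {}" by (auto simp: Wg_def)
  qed
  finally show ?thesis by (simp add: U_def)
qed

lemma fp_zero: "forcing_polynomial (pyrene_V 0) (pyrene_E 0) = 1"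
proof -
  have V: "pyrene_V 0 = {}" and E: "pyrene_E 0 = {}"
    by (simp_all add: pyrene_V_def pyrene_E_def pyrene_centres_def)
  have PM: "perfect_matchings {} {} = {{}}"
    by (auto simp: perfect_matchings_def perfect_matching_def)
  have FS: "{S. forcing_set {} {} {} S} = {{}}"
    by (auto simp: forcing_set_def perfect_matching_def)
  show ?thesis unfolding V E forcing_polynomial_def PM
    by (simp add: forcing_number_def FS)
qed

theorem theorem3p2:
  fixes n :: nat
  shows "forcing_polynomial (pyrene_V n) (pyrene_E n) =
    monom 1 n * (\<Sum>j = 0..n. \<Sum>i = (j + n + 1) div 2..n.
      monom ((-1) ^ (n - i) * 2 ^ (2 * i + j - n) * int (i choose (n - i))
             * int ((2 * i - n) choose j)) j)"
proof (cases "n = 0")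
  case True
  then show ?thesis using fp_zero inner_eq[of 0] by (simp add: VV_0)
next
  case False
  then have "forcing_polynomial (pyrene_V n) (pyrene_E n) = [:0,1:]^n * VV n"
    using fp_sum[of n] U_closed[of n] by simp
  moreover have "monom 1 n = [:0,1::int:]^n" by (simp add: monom_altdef)
  ultimately show ?thesis unfolding inner_eq by simp
qed

end
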